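(* Let $\mathcal{U}=\{\bm{x}_1,\dots,\bm{x}_{n_u}\}\subset\mathbb{R}^d$ be a finite set of unlabeled samples, and let $g_{\bm\theta}:\mathbb{R}^d\to\mathbb{R}^{m}\setminus\{0\}$ be a network with parameters $\bm\theta$, with normalized embedding $\tilde g(\bm x)=g_{\bm\theta}(\bm x)/\|g_{\bm\theta}(\bm x)\|_2$. Let $\mathcal{U}=\mathcal{S}_0\cup\mathcal{S}_1$ be a fixed partition (not depending on $\bm\theta$) into nonempty sets, where $\mathcal{S}_c$ is the set of samples whose classifier-predicted label is $\tilde y=c$, and let $\bm\nu_c=\frac{1}{|\mathcal{S}_c|}\sum_{\bm x\in\mathcal{S}_c}\tilde g(\bm x)$ and $\tilde{\bm\nu}_c=\bm\nu_c/\|\bm\nu_c\|$ (assumed $\bm\nu_c\neq 0$). Define the clustering objective $$\mathcal{R}(\bm\theta)=\frac{2}{n_u}\sum_{c\in\{0,1\}}\sum_{\bm x\in\mathcal{S}_c}\|\tilde g(\bm x)-\bm\nu_c\|^2$$ and the (pseudo-label complete-data) log-likelihood $$\ell(\bm\theta)=\sum_{\bm x\in\mathcal{U}}\sum_{y\in\{0,1\}}\mathbb{1}(\tilde y=y)\log p(\bm x,y\mid\bm\theta).$$ Assume each class-conditional distribution in representation space is a von Mises–Fisher distribution, $p(\bm x\mid y=c,\bm\theta)=c_d(\kappa)\,e^{\kappa\tilde{\bm\nu}_c^\top\tilde g(\bm x)}$ with fixed concentration parameter $\kappa>0$ and normalization constant $c_d(\kappa)$, and that the class prior is uniform, $p(y=0)=p(y=1)=1/2$.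 Then minimizing $\mathcal{R}(\bm\theta)$ over $\bm\theta$ is equivalent to maximizing $$L_1=\sum_{c\in\{0,1\}}\frac{|\mathcal{S}_c|}{n_u}\|\bm\nu_c\|^2,$$ maximizing $\ell(\bm\theta)$ over $\bm\theta$ is equivalent to maximizing $$L_2=\sum_{c\in\{0,1\}}\frac{|\mathcal{S}_c|}{n_u}\|\bm\nu_c\|,$$ and $L_1\le L_2$.
   Context: Here "equivalent" means the two objectives have the same set of optimizers over $\bm\theta$ (they differ by a strictly monotone transformation not depending on $\bm\theta$). The setting is positive-unlabeled learning: the labels of unlabeled samples are replaced by pseudo-labels $\tilde y=\arg\max_c f_c(\bm x)$ from a classifier $f$, and the latent class variable's posterior is taken to be the indicator $\mathbb{1}(\tilde y=y)$. *)

theory Defs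
  imports "HOL-Analysis.Analysis"
begin

text \<open>Classes are indexed by naturals; only c \<in> {0,1} is used.
  g :: parameter \<Rightarrow> sample \<Rightarrow> representation; S c = samples with predicted label c.\<close>

definition gnorm :: "('p \<Rightarrow> 'x \<Rightarrow> 'v::real_normed_vector) \<Rightarrow> 'p \<Rightarrow> 'x \<Rightarrow> 'v" where
  "gnorm g \<theta> x = (1 / norm (g \<theta> x)) *\<^sub>R g \<theta> x"

definition cmean :: "('p \<Rightarrow> 'x \<Rightarrow> 'v::real_normed_vector) \<Rightarrow> (nat \<Rightarrow> 'x set) \<Rightarrow> 'p \<Rightarrow> nat \<Rightarrow> 'v" where
  "cmean g S \<theta> c = (1 / real (card (S c))) *\<^sub>R (\<Sum>x\<in>S c. gnorm g \<theta> x)"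

definition cmean_dir :: "('p \<Rightarrow> 'x \<Rightarrow> 'v::real_normed_vector) \<Rightarrow> (nat \<Rightarrow> 'x set) \<Rightarrow> 'p \<Rightarrow> nat \<Rightarrow> 'v" where
  "cmean_dir g S \<theta> c = (1 / norm (cmean g S \<theta> c)) *\<^sub>R cmean g S \<theta> c"

definition clust_obj :: "('p \<Rightarrow> 'x \<Rightarrow> 'v::real_normed_vector) \<Rightarrow> 'x set \<Rightarrow> (nat \<Rightarrow> 'x set) \<Rightarrow> 'p \<Rightarrow> real" where
  "clust_obj g U S \<theta> = 2 / real (card U) *
     (\<Sum>c\<in>{0,1}. \<Sum>x\<in>S c. (norm (gnorm g \<theta> x - cmean g S \<theta> c))\<^sup>2)"

definition vmf :: "real \<Rightarrow> real \<Rightarrow> 'v::real_inner \<Rightarrow> 'v \<Rightarrow> real" where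
  "vmf cd \<kappa> \<mu> z = cd * exp (\<kappa> * (\<mu> \<bullet> z))"

text \<open>Pseudo-label complete-data log-likelihood, with p(x,y|theta) = p(x|y,theta) p(y), p(y)=1/2,
  and pseudo-label posterior 1(ytilde = y), ytilde = c iff x \<in> S c.\<close>
definition loglik :: "real \<Rightarrow> real \<Rightarrow> ('p \<Rightarrow> 'x \<Rightarrow> 'v::real_inner) \<Rightarrow> 'x set \<Rightarrow> (nat \<Rightarrow> 'x set) \<Rightarrow> 'p \<Rightarrow> real" where
  "loglik cd \<kappa> g U S \<theta> =
     (\<Sum>x\<in>U. \<Sum>y\<in>{0,1}. (if x \<in> S y then 1 else 0) *
        ln (vmf cd \<kappa> (cmean_dir g S \<theta> y) (gnorm g \<theta> x) * (1/2)))"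

definition L1 :: "('p \<Rightarrow> 'x \<Rightarrow> 'v::real_normed_vector) \<Rightarrow> 'x set \<Rightarrow> (nat \<Rightarrow> 'x set) \<Rightarrow> 'p \<Rightarrow> real" where
  "L1 g U S \<theta> = (\<Sum>c\<in>{0,1}. real (card (S c)) / real (card U) * (norm (cmean g S \<theta> c))\<^sup>2)"

definition L2 :: "('p \<Rightarrow> 'x \<Rightarrow> 'v::real_normed_vector) \<Rightarrow> 'x set \<Rightarrow> (nat \<Rightarrow> 'x set) \<Rightarrow> 'p \<Rightarrow> real" where
  "L2 g U S \<theta> = (\<Sum>c\<in>{0,1}. real (card (S c)) / real (card U) * norm (cmean g S \<theta> c))"

definition maximizers :: "('p \<Rightarrow> real) \<Rightarrow> 'p set" where
  "maximizers f = {\<theta>. \<forall>\<theta>'. f \<theta>' \<le> f \<theta>}"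

definition equiv_max :: "('p \<Rightarrow> real) \<Rightarrow> ('p \<Rightarrow> real) \<Rightarrow> bool" where
  "equiv_max f h \<longleftrightarrow> (\<exists>\<phi>::real \<Rightarrow> real. strict_mono \<phi> \<and> (\<forall>\<theta>. f \<theta> = \<phi> (h \<theta>)))
                      \<and> maximizers f = maximizers h"

end

theory Submission
  imports Defs
begin

lemma equiv_maxI:
  assumes "strict_mono (\<phi>::real \<Rightarrow> real)" "\<And>\<theta>. f \<theta> = \<phi> (h \<theta>)"
  shows "equiv_max f h"
  unfolding equiv_max_def maximizers_def
  using assms by (auto simp: strict_mono_less_eq)

lemma clust_class:
  fixes z :: "'a \<Rightarrow> 'v::real_inner"
  assumes "finite A" "A \<noteq> {}" "\<And>x. x \<in> A \<Longrightarrow> norm (z x) = 1"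
    and nu: "\<nu> = (1/real(card A)) *\<^sub>R (\<Sum>x\<in>A. z x)"
  shows "(\<Sum>x\<in>A. (norm (z x - \<nu>))\<^sup>2) = real (card A) - real (card A) * (norm \<nu>)\<^sup>2"
proof -
  have cA: "real (card A) > 0" using assms by (simp add: card_gt_0_iff)
  have s: "(\<Sum>x\<in>A. z x) = real (card A) *\<^sub>R \<nu>" using cA nu by simp
  have zz: "z x \<bullet> z x = 1" if "x \<in> A" for x
    using assms(3)[OF that] by (metis power2_norm_eq_inner power_one)
  have "(\<Sum>x\<in>A. (norm (z x - \<nu>))\<^sup>2) = (\<Sum>x\<in>A. 1 - 2 * (z x \<bullet> \<nu>) + \<nu> \<bullet> \<nu>)"
    apply (rule sum.cong, simp)
    by (simp add: power2_norm_eq_inner inner_diff_left inner_diff_right inner_commute zz)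
  also have "\<dots> = real (card A) - 2 * ((\<Sum>x\<in>A. z x) \<bullet> \<nu>) + real (card A) * (\<nu> \<bullet> \<nu>)"
    by (simp add: sum.distrib sum_subtractf inner_sum_left sum_distrib_left)
  also have "\<dots> = real (card A) - real (card A) * (norm \<nu>)\<^sup>2"
    by (simp add: s power2_norm_eq_inner)
  finally show ?thesis .
qed

lemma norm_cmean_le:
  fixes z :: "'a \<Rightarrow> 'v::real_normed_vector"
  assumes "finite A" "A \<noteq> {}" "\<And>x. x \<in> A \<Longrightarrow> norm (z x) = 1"
  shows "norm ((1/real(card A)) *\<^sub>R (\<Sum>x\<in>A. z x)) \<le> 1"
proof -
  have cA: "real (card A) > 0" using assms by (simp add: card_gt_0_iff)
  have "norm (\<Sum>x\<in>A. z x) \<le> (\<Sum>x\<in>A. norm (z x))" by (rule norm_sum)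
  also have "\<dots> = real (card A)" using assms by simp
  finally show ?thesis using cA by (simp add: field_simps)
qed

lemma ll_class:
  fixes z :: "'a \<Rightarrow> 'v::real_inner"
  assumes "\<nu> \<noteq> 0" and s: "(\<Sum>x\<in>A. z x) = real (card A) *\<^sub>R \<nu>" and "cd > 0"
  shows "(\<Sum>x\<in>A. ln (vmf cd \<kappa> ((1 / norm \<nu>) *\<^sub>R \<nu>) (z x) * (1/2)))
     = real (card A) * (ln cd - ln 2) + \<kappa> * (real (card A) * norm \<nu>)"
proof -
  have "(\<Sum>x\<in>A. ln (vmf cd \<kappa> ((1 / norm \<nu>) *\<^sub>R \<nu>) (z x) * (1/2)))
     = (\<Sum>x\<in>A. (ln cd - ln 2) + \<kappa> * (((1 / norm \<nu>) *\<^sub>R \<nu>) \<bullet> z x))"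
    apply (rule sum.cong, simp)
    using assms(3) by (simp add: vmf_def ln_mult ln_div)
  also have "\<dots> = real (card A) * (ln cd - ln 2) + \<kappa> * (((1 / norm \<nu>) *\<^sub>R \<nu>) \<bullet> (\<Sum>x\<in>A. z x))"
    by (simp add: sum.distrib inner_sum_right sum_distrib_left)
  also have "((1 / norm \<nu>) *\<^sub>R \<nu>) \<bullet> (\<Sum>x\<in>A. z x) = real (card A) * norm \<nu>"
    using assms(1) by (simp add: s power2_norm_eq_inner[symmetric] power2_eq_square)
  finally show ?thesis .
qed

lemma arith1:
  fixes N n0 n1 a0 a1 C L :: real
  assumes "C = 2 / N * ((n0 - n0 * a0) + (n1 - n1 * a1))" "L = n0 / N * a0 + n1 / N * a1"
    "N > 0" "N = n0 + n1"
  shows "- C = 2 * L - 2"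
proof -
  have l: "L * N = n0*a0 + n1*a1" using assms(2,3) by (simp add: field_simps)
  have c: "C * N = 2*((n0 - n0*a0)+(n1-n1*a1))" using assms(1,3) by (simp add: field_simps)
  have "(-C) * N = (2*L - 2) * N" using l c assms(4) by (simp add: algebra_simps)
  then show ?thesis using assms(3) using mult_right_cancel[of N "-C" "2*L-2"] by (metis less_irrefl)
qed

lemma arith2:
  fixes N n0 n1 a0 a1 C L k c :: real
  assumes "C = (n0 * c + k * (n0 * a0)) + (n1 * c + k * (n1 * a1))" "L = n0 / N * a0 + n1 / N * a1"
    "N > 0" "N = n0 + n1"
  shows "C = N * c + k * N * L"
proof -
  have l: "L * N = n0*a0 + n1*a1" using assms(2,3) by (simp add: field_simps)
  have "k * N * L = k * (n0*a0 + n1*a1)" using l by (simp add: ac_simps)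
  then show ?thesis using assms(1,4) by (simp add: algebra_simps)
qed

theorem theorem1:
  fixes U :: "(real ^ 'd) set"
    and S :: "nat \<Rightarrow> (real ^ 'd) set"
    and g :: "'p \<Rightarrow> real ^ 'd \<Rightarrow> real ^ 'm"
    and \<kappa> cd :: real
  assumes "finite U"
    and "U = S 0 \<union> S 1" and "S 0 \<inter> S 1 = {}"
    and "S 0 \<noteq> {}" and "S 1 \<noteq> {}"
    and "\<And>\<theta> x. x \<in> U \<Longrightarrow> g \<theta> x \<noteq> 0"
    and "\<And>\<theta> c. c \<in> {0,1} \<Longrightarrow> cmean g S \<theta> c \<noteq> 0"
    and "\<kappa> > 0" and "cd > 0"
  shows "equiv_max (\<lambda>\<theta>. - clust_obj g U S \<theta>) (L1 g U S)
         \<and> equiv_max (loglik cd \<kappa> g U S) (L2 g U S)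
         \<and> (\<forall>\<theta>. L1 g U S \<theta> \<le> L2 g U S \<theta>)"
proof -
  have fin: "finite (S c)" if "c \<in> {0,1}" for c
    using that assms(1,2) by auto
  have ne: "S c \<noteq> {}" if "c \<in> {0,1}" for c
    using that assms(4,5) by auto
  have sub: "S c \<subseteq> U" if "c \<in> {0,1}" for c
    using that assms(2) by auto
  have unit: "norm (gnorm g \<theta> x) = 1" if "x \<in> S c" "c \<in> {0,1}" for \<theta> x c
    using assms(6)[of x \<theta>] sub[OF that(2)] that(1) by (auto simp: gnorm_def)
  have cU: "real (card U) = real (card (S 0)) + real (card (S 1))"
    using assms(1,2,3) fin by (simp add: card_Un_disjoint)
  have nU: "real (card U) > 0" using assms(1,2,4) by (simp add: card_gt_0_iff)
  define n0 where "n0 = real (card (S 0))"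
  define n1 where "n1 = real (card (S 1))"
  have cl: "(\<Sum>x\<in>S c. (norm (gnorm g \<theta> x - cmean g S \<theta> c))\<^sup>2)
      = real (card (S c)) - real (card (S c)) * (norm (cmean g S \<theta> c))\<^sup>2"
    if "c \<in> {0,1}" for c \<theta>
    by (rule clust_class[OF fin[OF that] ne[OF that] unit[OF _ that]]) (simp_all add: cmean_def)
  have part1: "- clust_obj g U S \<theta> = 2 * L1 g U S \<theta> - 2" for \<theta>
  proof -
    have "clust_obj g U S \<theta> = 2 / real (card U) *
       ((n0 - n0 * (norm (cmean g S \<theta> 0))\<^sup>2) + (n1 - n1 * (norm (cmean g S \<theta> 1))\<^sup>2))"
      unfolding clust_obj_def using cl[of 0 \<theta>] cl[of 1 \<theta>] by (simp add: n0_def n1_def)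
    moreover have "L1 g U S \<theta> = n0 / real (card U) * (norm (cmean g S \<theta> 0))\<^sup>2
       + n1 / real (card U) * (norm (cmean g S \<theta> 1))\<^sup>2"
      unfolding L1_def by (simp add: n0_def n1_def)
    ultimately show ?thesis using nU cU[folded n0_def n1_def] by (rule arith1)
  qed
  have E1: "equiv_max (\<lambda>\<theta>. - clust_obj g U S \<theta>) (L1 g U S)"
    by (rule equiv_maxI[where \<phi> = "\<lambda>t. 2 * t - 2"]) (auto simp: strict_mono_def part1)
  have llc: "(\<Sum>x\<in>S c. ln (vmf cd \<kappa> (cmean_dir g S \<theta> c) (gnorm g \<theta> x) * (1/2)))
     = real (card (S c)) * (ln cd - ln 2) + \<kappa> * (real (card (S c)) * norm (cmean g S \<theta> c))"
    if "c \<in> {0,1}" for c \<theta>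
    unfolding cmean_dir_def
    by (rule ll_class[OF assms(7)[OF that]]) (use fin[OF that] ne[OF that] assms(9) in \<open>auto simp: cmean_def card_gt_0_iff\<close>)
  have swap: "loglik cd \<kappa> g U S \<theta> = (\<Sum>y\<in>{0,1}. \<Sum>x\<in>S y.
        ln (vmf cd \<kappa> (cmean_dir g S \<theta> y) (gnorm g \<theta> x) * (1/2)))" for \<theta>
  proof -
    have "loglik cd \<kappa> g U S \<theta> = (\<Sum>y\<in>{0::nat,1}. \<Sum>x\<in>U. (if x \<in> S y then 1 else 0) *
        ln (vmf cd \<kappa> (cmean_dir g S \<theta> y) (gnorm g \<theta> x) * (1/2)))"
      unfolding loglik_def by (rule sum.swap)
    also have "\<dots> = (\<Sum>y\<in>{0,1}. \<Sum>x\<in>S y.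
        ln (vmf cd \<kappa> (cmean_dir g S \<theta> y) (gnorm g \<theta> x) * (1/2)))"
    proof (rule sum.cong, simp)
      fix y :: nat assume y: "y \<in> {0,1}"
      have "(\<Sum>x\<in>U. (if x \<in> S y then 1 else 0) *
          ln (vmf cd \<kappa> (cmean_dir g S \<theta> y) (gnorm g \<theta> x) * (1/2)))
        = (\<Sum>x\<in>U \<inter> S y. ln (vmf cd \<kappa> (cmean_dir g S \<theta> y) (gnorm g \<theta> x) * (1/2)))"
        by (subst sum.inter_restrict[OF assms(1)]) (rule sum.cong, simp_all)
      also have "U \<inter> S y = S y" using sub[OF y] by blast
      finally show "(\<Sum>x\<in>U. (if x \<in> S y then 1 else 0) *
          ln (vmf cd \<kappa> (cmean_dir g S \<theta> y) (gnorm g \<theta> x) * (1/2)))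
        = (\<Sum>x\<in>S y. ln (vmf cd \<kappa> (cmean_dir g S \<theta> y) (gnorm g \<theta> x) * (1/2)))" .
    qed
    finally show ?thesis .
  qed
  have part2: "loglik cd \<kappa> g U S \<theta> = real (card U) * (ln cd - ln 2) + \<kappa> * real (card U) * L2 g U S \<theta>" for \<theta>
  proof -
    have "loglik cd \<kappa> g U S \<theta> = (n0 * (ln cd - ln 2) + \<kappa> * (n0 * norm (cmean g S \<theta> 0)))
       + (n1 * (ln cd - ln 2) + \<kappa> * (n1 * norm (cmean g S \<theta> 1)))"
      using swap[of \<theta>] llc[of 0 \<theta>] llc[of 1 \<theta>] by (simp add: n0_def n1_def)
    moreover have "L2 g U S \<theta> = n0 / real (card U) * norm (cmean g S \<theta> 0)
       + n1 / real (card U) * norm (cmean g S \<theta> 1)"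
      unfolding L2_def by (simp add: n0_def n1_def)
    ultimately show ?thesis using nU cU[folded n0_def n1_def] by (rule arith2)
  qed
  have E2: "equiv_max (loglik cd \<kappa> g U S) (L2 g U S)"
    by (rule equiv_maxI[where \<phi> = "\<lambda>t. real (card U) * (ln cd - ln 2) + \<kappa> * real (card U) * t"])
       (use assms(8) nU in \<open>auto simp: strict_mono_def part2\<close>)
  have le1: "norm (cmean g S \<theta> c) \<le> 1" if "c \<in> {0,1}" for c \<theta>
    unfolding cmean_def by (rule norm_cmean_le[OF fin[OF that] ne[OF that] unit[OF _ that]])
  have sq: "(norm (cmean g S \<theta> c))\<^sup>2 \<le> norm (cmean g S \<theta> c)" if "c \<in> {0,1}" for c \<theta>
    using le1[OF that, of \<theta>] by (simp add: power2_eq_square mult_left_le)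
  have I: "L1 g U S \<theta> \<le> L2 g U S \<theta>" for \<theta>
    unfolding L1_def L2_def
    by (rule sum_mono, rule mult_left_mono[OF sq]) auto
  show ?thesis using E1 E2 I by blast
qed

end
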